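(* For every nontrivial finite group $G$, $\beta(G)\ge\beta_{\mathrm g}(G)$. Moreover, there exist finite groups $G$ with $\beta(G)>\beta_{\mathrm g}(G)$.
   Context: For a nonempty subset $X$ of a group $G$, $Q(X):=\{xy^{-1}: x,y\in X\}$. Nonempty subsets $S_1,S_2,S_3$ of $G$ satisfy the Triple Product Property (TPP) if for all $s_i\in Q(S_i)$: $s_1s_2s_3=1$ iff $s_1=s_2=s_3=1$. A group $G$ realizes $\langle n,p,m\rangle$ if there are subsets $S_1,S_2,S_3\subseteq G$ with $|S_1|=n$, $|S_2|=p$, $|S_3|=m$ satisfying the TPP; it realizes it through subgroups if the $S_i$ can be chosen to be subgroups. For a nontrivial finite group $G$, the TPP capacity is $\beta(G):=\max\{npm : G \text{ realizes } \langle n,p,m\rangle\}$ and the TPP subgroup capacity is $\beta_{\mathrm g}(G):=\max\{npm : G \text{ realizes } \langle n,p,m\rangle \text{ through subgroups}\}$. *)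

theory Defs
  imports "HOL-Algebra.Group"
begin

definition quot_set :: "('a, 'b) monoid_scheme \<Rightarrow> 'a set \<Rightarrow> 'a set" where
  "quot_set G X = {x \<otimes>\<^bsub>G\<^esub> inv\<^bsub>G\<^esub> y | x y. x \<in> X \<and> y \<in> X}"

definition TPP :: "('a, 'b) monoid_scheme \<Rightarrow> 'a set \<Rightarrow> 'a set \<Rightarrow> 'a set \<Rightarrow> bool" where
  "TPP G S1 S2 S3 \<longleftrightarrow>
     S1 \<subseteq> carrier G \<and> S2 \<subseteq> carrier G \<and> S3 \<subseteq> carrier G \<and>
     S1 \<noteq> {} \<and> S2 \<noteq> {} \<and> S3 \<noteq> {} \<and>
     (\<forall>s1\<in>quot_set G S1. \<forall>s2\<in>quot_set G S2. \<forall>s3\<in>quot_set G S3.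
        (s1 \<otimes>\<^bsub>G\<^esub> s2 \<otimes>\<^bsub>G\<^esub> s3 = \<one>\<^bsub>G\<^esub>
          \<longleftrightarrow> s1 = \<one>\<^bsub>G\<^esub> \<and> s2 = \<one>\<^bsub>G\<^esub> \<and> s3 = \<one>\<^bsub>G\<^esub>))"

definition realizes :: "('a, 'b) monoid_scheme \<Rightarrow> nat \<Rightarrow> nat \<Rightarrow> nat \<Rightarrow> bool" where
  "realizes G n p m \<longleftrightarrow> (\<exists>S1 S2 S3. TPP G S1 S2 S3 \<and>
      card S1 = n \<and> card S2 = p \<and> card S3 = m)"

definition realizes_subgroups :: "('a, 'b) monoid_scheme \<Rightarrow> nat \<Rightarrow> nat \<Rightarrow> nat \<Rightarrow> bool" where
  "realizes_subgroups G n p m \<longleftrightarrow> (\<exists>S1 S2 S3. TPP G S1 S2 S3 \<and>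
      subgroup S1 G \<and> subgroup S2 G \<and> subgroup S3 G \<and>
      card S1 = n \<and> card S2 = p \<and> card S3 = m)"

definition TPP_capacity :: "('a, 'b) monoid_scheme \<Rightarrow> nat" where
  "TPP_capacity G = Max {n * p * m | n p m. realizes G n p m}"

definition TPP_subgroup_capacity :: "('a, 'b) monoid_scheme \<Rightarrow> nat" where
  "TPP_subgroup_capacity G = Max {n * p * m | n p m. realizes_subgroups G n p m}"

end

theory Submission
  imports Defs
begin

lemma quot_setI: "x \<in> S \<Longrightarrow> y \<in> S \<Longrightarrow> x \<otimes>\<^bsub>G\<^esub> inv\<^bsub>G\<^esub> y \<in> quot_set G S"
  unfolding quot_set_def by blast

lemma quot_set_one:
  assumes "group G" "x \<in> S" "S \<subseteq> carrier G"
  shows "\<one>\<^bsub>G\<^esub> \<in> quot_set G S"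
proof -
  have c: "x \<in> carrier G" using assms(2,3) by blast
  have "x \<otimes>\<^bsub>G\<^esub> inv\<^bsub>G\<^esub> x = \<one>\<^bsub>G\<^esub>" by (rule group.r_inv[OF assms(1) c])
  then show ?thesis using quot_setI[OF assms(2) assms(2), of G] by simp
qed

lemma card_pair_bound:
  fixes G :: "('a, 'b) monoid_scheme" (structure)
  assumes G: "group G" and fin: "finite (carrier G)"
    and AB: "A \<subseteq> carrier G" "B \<subseteq> carrier G"
    and H: "\<forall>a\<in>quot_set G A. \<forall>b\<in>quot_set G B. a \<otimes>\<^bsub>G\<^esub> b = \<one>\<^bsub>G\<^esub> \<longrightarrow> a = \<one>\<^bsub>G\<^esub>"
  shows "card A * card B \<le> card (carrier G)"
proof -
  interpret group G by (rule G)
  have inj: "inj_on (\<lambda>(a,b). inv a \<otimes> b) (A \<times> B)"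
  proof (rule inj_onI, clarify)
    fix a b a' b' assume a: "a \<in> A" and b: "b \<in> B" and a': "a' \<in> A" and b': "b' \<in> B"
      and eq: "inv a \<otimes> b = inv a' \<otimes> b'"
    have ac: "a \<in> carrier G" "a' \<in> carrier G" "b \<in> carrier G" "b' \<in> carrier G"
      using a b a' b' AB by auto
    have e1: "b = a \<otimes> (inv a' \<otimes> b')"
      using eq ac by (metis inv_closed inv_solve_left m_closed)
    have e3: "b \<otimes> inv b' = a \<otimes> inv a'"
      using e1 ac by (simp add: m_assoc)
    have e2: "(a' \<otimes> inv a) \<otimes> (b \<otimes> inv b') = \<one>"
      unfolding e3 using ac by (simp add: m_assoc[symmetric]) (simp add: m_assoc)
    have "a' \<otimes> inv a = \<one>"
      by (rule H[rule_format, OF quot_setI[OF a' a] quot_setI[OF b b'] e2])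
    then have aa: "a = a'" using inv_equality[of a' "inv a"] ac by simp
    then have "b = b'" using eq ac by simp
    then show "a = a' \<and> b = b'" using aa by simp
  qed
  have "card (A \<times> B) \<le> card (carrier G)"
    by (rule card_inj_on_le[OF inj _ fin]) (use AB in auto)
  then show ?thesis by (simp add: card_cartesian_product)
qed

lemma TPP_pairs:
  fixes G :: "('a, 'b) monoid_scheme" (structure)
  assumes G: "group G" and T: "TPP G S1 S2 S3"
  shows "\<forall>a\<in>quot_set G S1. \<forall>b\<in>quot_set G S2. a \<otimes>\<^bsub>G\<^esub> b = \<one>\<^bsub>G\<^esub> \<longrightarrow> a = \<one>\<^bsub>G\<^esub>"
    and "\<forall>a\<in>quot_set G S1. \<forall>b\<in>quot_set G S3. a \<otimes>\<^bsub>G\<^esub> b = \<one>\<^bsub>G\<^esub> \<longrightarrow> a = \<one>\<^bsub>G\<^esub>"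
    and "\<forall>a\<in>quot_set G S2. \<forall>b\<in>quot_set G S3. a \<otimes>\<^bsub>G\<^esub> b = \<one>\<^bsub>G\<^esub> \<longrightarrow> a = \<one>\<^bsub>G\<^esub>"
proof -
  interpret group G by (rule G)
  have sub: "S1 \<subseteq> carrier G" "S2 \<subseteq> carrier G" "S3 \<subseteq> carrier G"
    and ne: "S1 \<noteq> {}" "S2 \<noteq> {}" "S3 \<noteq> {}"
    and P: "\<forall>s1\<in>quot_set G S1. \<forall>s2\<in>quot_set G S2. \<forall>s3\<in>quot_set G S3.
        (s1 \<otimes> s2 \<otimes> s3 = \<one> \<longleftrightarrow> s1 = \<one> \<and> s2 = \<one> \<and> s3 = \<one>)"
    using T unfolding TPP_def by auto
  have qc: "quot_set G S \<subseteq> carrier G" if "S \<subseteq> carrier G" for S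
    using that unfolding quot_set_def by auto
  have o1: "\<one> \<in> quot_set G S1" using ne(1) sub(1) quot_set_one[OF G] by blast
  have o2: "\<one> \<in> quot_set G S2" using ne(2) sub(2) quot_set_one[OF G] by blast
  have o3: "\<one> \<in> quot_set G S3" using ne(3) sub(3) quot_set_one[OF G] by blast
  show "\<forall>a\<in>quot_set G S1. \<forall>b\<in>quot_set G S2. a \<otimes> b = \<one> \<longrightarrow> a = \<one>"
  proof (intro ballI impI)
    fix a b assume h: "a \<in> quot_set G S1" "b \<in> quot_set G S2" "a \<otimes> b = \<one>"
    have "a \<in> carrier G" "b \<in> carrier G" using h(1,2) qc sub by blast+
    then have "a \<otimes> b \<otimes> \<one> = \<one>" using h by simp
    then show "a = \<one>" using P[rule_format, OF h(1) h(2) o3] by simp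
  qed
  show "\<forall>a\<in>quot_set G S1. \<forall>b\<in>quot_set G S3. a \<otimes> b = \<one> \<longrightarrow> a = \<one>"
  proof (intro ballI impI)
    fix a b assume h: "a \<in> quot_set G S1" "b \<in> quot_set G S3" "a \<otimes> b = \<one>"
    have "a \<in> carrier G" using h(1) qc sub by blast
    then have "a \<otimes> \<one> \<otimes> b = \<one>" using h by simp
    then show "a = \<one>" using P[rule_format, OF h(1) o2 h(2)] by simp
  qed
  show "\<forall>a\<in>quot_set G S2. \<forall>b\<in>quot_set G S3. a \<otimes> b = \<one> \<longrightarrow> a = \<one>"
  proof (intro ballI impI)
    fix a b assume h: "a \<in> quot_set G S2" "b \<in> quot_set G S3" "a \<otimes> b = \<one>"
    have "a \<in> carrier G" using h(1) qc sub by blast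
    then have "\<one> \<otimes> a \<otimes> b = \<one>" using h by simp
    then show "a = \<one>" using P[rule_format, OF o1 h(1) h(2)] by simp
  qed
qed

lemma realizes_bound:
  assumes "realizes G n p m" "finite (carrier G)"
  shows "n * p * m \<le> card (carrier G) * card (carrier G) * card (carrier G)"
proof -
  obtain S1 S2 S3 where T: "TPP G S1 S2 S3" and c: "card S1 = n" "card S2 = p" "card S3 = m"
    using assms(1) unfolding realizes_def by blast
  have "S1 \<subseteq> carrier G" "S2 \<subseteq> carrier G" "S3 \<subseteq> carrier G" using T unfolding TPP_def by auto
  then have "n \<le> card (carrier G)" "p \<le> card (carrier G)" "m \<le> card (carrier G)"
    using c card_mono assms(2) by blast+
  then show ?thesis by (simp add: mult_le_mono)
qed

lemma realizes_finite:
  assumes "finite (carrier G)"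
  shows "finite {n * p * m | n p m. realizes G n p m}"
proof (rule finite_subset[of _ "{..card (carrier G) * card (carrier G) * card (carrier G)}"])
  show "{n * p * m | n p m. realizes G n p m} \<subseteq> {..card (carrier G) * card (carrier G) * card (carrier G)}"
  proof
    fix x assume "x \<in> {n * p * m | n p m. realizes G n p m}"
    then obtain n p m where "x = n * p * m" "realizes G n p m" by blast
    then show "x \<in> {..card (carrier G) * card (carrier G) * card (carrier G)}"
      using realizes_bound[OF _ assms] by simp
  qed
qed simp

lemma triv_TPP:
  fixes G :: "('a, 'b) monoid_scheme" (structure)
  assumes "group G"
  shows "TPP G {\<one>\<^bsub>G\<^esub>} {\<one>\<^bsub>G\<^esub>} {\<one>\<^bsub>G\<^esub>}"
proof -
  interpret group G by (rule assms)
  have "quot_set G {\<one>} = {\<one>}" unfolding quot_set_def by auto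
  then show ?thesis unfolding TPP_def by auto
qed

lemma sub_realizes:
  assumes "group G"
  shows "{n * p * m | n p m. realizes_subgroups G n p m} \<noteq> {}"
    and "{n * p * m | n p m. realizes_subgroups G n p m} \<subseteq> {n * p * m | n p m. realizes G n p m}"
proof -
  have "realizes_subgroups G 1 1 1"
    unfolding realizes_subgroups_def
    apply (rule exI[of _ "{\<one>\<^bsub>G\<^esub>}"])+
    using triv_TPP[OF assms] group.triv_subgroup[OF assms] by simp
  then show "{n * p * m | n p m. realizes_subgroups G n p m} \<noteq> {}" by blast
  show "{n * p * m | n p m. realizes_subgroups G n p m} \<subseteq> {n * p * m | n p m. realizes G n p m}"
  proof clarify
    fix n p m assume "realizes_subgroups G n p m"
    then have "realizes G n p m" unfolding realizes_subgroups_def realizes_def by blast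
    then show "\<exists>n' p' m'. n * p * m = n' * p' * m' \<and> realizes G n' p' m'" by blast
  qed
qed

lemma part1:
  assumes "group G" "finite (carrier G)"
  shows "TPP_subgroup_capacity G \<le> TPP_capacity G"
  unfolding TPP_subgroup_capacity_def TPP_capacity_def
  by (rule Max_mono[OF sub_realizes(2)[OF assms(1)] sub_realizes(1)[OF assms(1)] realizes_finite[OF assms(2)]])

lemma sub_conflict:
  fixes G :: "('a, 'b) monoid_scheme" (structure)
  assumes G: "group G" and T: "TPP G S1 S2 S3"
    and sg: "subgroup S1 G" "subgroup S2 G" "subgroup S3 G"
  shows "w \<in> S1 \<Longrightarrow> w \<in> S2 \<Longrightarrow> w = \<one>\<^bsub>G\<^esub>"
    and "w \<in> S1 \<Longrightarrow> w \<in> S3 \<Longrightarrow> w = \<one>\<^bsub>G\<^esub>"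
    and "w \<in> S2 \<Longrightarrow> w \<in> S3 \<Longrightarrow> w = \<one>\<^bsub>G\<^esub>"
proof -
  interpret group G by (rule G)
  have q: "w \<in> quot_set G S" "inv w \<in> quot_set G S" if "subgroup S G" "w \<in> S" for S
  proof -
    have c: "w \<in> carrier G" using subgroup.subset[OF that(1)] that(2) by blast
    have c2: "\<one> \<in> S" by (rule subgroup.one_closed[OF that(1)])
    have "w \<otimes> inv \<one> = w" "\<one> \<otimes> inv w = inv w" using c by auto
    then show "w \<in> quot_set G S" "inv w \<in> quot_set G S"
      using quot_setI[OF that(2) c2, of G] quot_setI[OF c2 that(2), of G] by simp_all
  qed
  have pr: "w \<otimes> inv w = \<one>" if "subgroup S G" "w \<in> S" for S
    using subgroup.subset[OF that(1)] that(2) by auto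
  show "w = \<one>" if h1: "w \<in> S1" and h2: "w \<in> S2"
    by (rule TPP_pairs(1)[OF G T, rule_format, OF q(1)[OF sg(1) h1] q(2)[OF sg(2) h2] pr[OF sg(1) h1]])
  show "w = \<one>" if h1: "w \<in> S1" and h2: "w \<in> S3"
    by (rule TPP_pairs(2)[OF G T, rule_format, OF q(1)[OF sg(1) h1] q(2)[OF sg(3) h2] pr[OF sg(1) h1]])
  show "w = \<one>" if h1: "w \<in> S2" and h2: "w \<in> S3"
    by (rule TPP_pairs(3)[OF G T, rule_format, OF q(1)[OF sg(2) h1] q(2)[OF sg(3) h2] pr[OF sg(2) h1]])
qed

definition dmul :: "nat \<Rightarrow> nat \<Rightarrow> nat" where
  "dmul a b = ((a mod 3 + (if even (a div 3) then b mod 3 else 2 * (b mod 3))) mod 3) + 3 * ((a div 3 + b div 3) mod 4)"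

definition D :: "nat monoid" where "D = \<lparr>carrier = {0,1,2,3,4,5,6,7,8,9,10,11}, mult = dmul, one = 0\<rparr>"

lemma D_simps: "carrier D = {0,1,2,3,4,5,6,7,8,9,10,11}" "x \<otimes>\<^bsub>D\<^esub> y = dmul x y" "\<one>\<^bsub>D\<^esub> = 0"
  unfolding D_def by simp_all

lemma tbl:
  "dmul 0 0 = 0"
  "dmul 0 1 = 1"
  "dmul 0 2 = 2"
  "dmul 0 3 = 3"
  "dmul 0 4 = 4"
  "dmul 0 5 = 5"
  "dmul 0 6 = 6"
  "dmul 0 7 = 7"
  "dmul 0 8 = 8"
  "dmul 0 9 = 9"
  "dmul 0 10 = 10"
  "dmul 0 11 = 11"
  "dmul 1 0 = 1"
  "dmul 1 1 = 2"
  "dmul 1 2 = 0"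
  "dmul 1 3 = 4"
  "dmul 1 4 = 5"
  "dmul 1 5 = 3"
  "dmul 1 6 = 7"
  "dmul 1 7 = 8"
  "dmul 1 8 = 6"
  "dmul 1 9 = 10"
  "dmul 1 10 = 11"
  "dmul 1 11 = 9"
  "dmul 2 0 = 2"
  "dmul 2 1 = 0"
  "dmul 2 2 = 1"
  "dmul 2 3 = 5"
  "dmul 2 4 = 3"
  "dmul 2 5 = 4"
  "dmul 2 6 = 8"
  "dmul 2 7 = 6"
  "dmul 2 8 = 7"
  "dmul 2 9 = 11"
  "dmul 2 10 = 9"
  "dmul 2 11 = 10"
  "dmul 3 0 = 3"
  "dmul 3 1 = 5"
  "dmul 3 2 = 4"
  "dmul 3 3 = 6"
  "dmul 3 4 = 8"
  "dmul 3 5 = 7"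
  "dmul 3 6 = 9"
  "dmul 3 7 = 11"
  "dmul 3 8 = 10"
  "dmul 3 9 = 0"
  "dmul 3 10 = 2"
  "dmul 3 11 = 1"
  "dmul 4 0 = 4"
  "dmul 4 1 = 3"
  "dmul 4 2 = 5"
  "dmul 4 3 = 7"
  "dmul 4 4 = 6"
  "dmul 4 5 = 8"
  "dmul 4 6 = 10"
  "dmul 4 7 = 9"
  "dmul 4 8 = 11"
  "dmul 4 9 = 1"
  "dmul 4 10 = 0"
  "dmul 4 11 = 2"
  "dmul 5 0 = 5"
  "dmul 5 1 = 4"
  "dmul 5 2 = 3"
  "dmul 5 3 = 8"
  "dmul 5 4 = 7"
  "dmul 5 5 = 6"
  "dmul 5 6 = 11"
  "dmul 5 7 = 10"
  "dmul 5 8 = 9"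
  "dmul 5 9 = 2"
  "dmul 5 10 = 1"
  "dmul 5 11 = 0"
  "dmul 6 0 = 6"
  "dmul 6 1 = 7"
  "dmul 6 2 = 8"
  "dmul 6 3 = 9"
  "dmul 6 4 = 10"
  "dmul 6 5 = 11"
  "dmul 6 6 = 0"
  "dmul 6 7 = 1"
  "dmul 6 8 = 2"
  "dmul 6 9 = 3"
  "dmul 6 10 = 4"
  "dmul 6 11 = 5"
  "dmul 7 0 = 7"
  "dmul 7 1 = 8"
  "dmul 7 2 = 6"
  "dmul 7 3 = 10"
  "dmul 7 4 = 11"
  "dmul 7 5 = 9"
  "dmul 7 6 = 1"
  "dmul 7 7 = 2"
  "dmul 7 8 = 0"
  "dmul 7 9 = 4"
  "dmul 7 10 = 5"
  "dmul 7 11 = 3"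
  "dmul 8 0 = 8"
  "dmul 8 1 = 6"
  "dmul 8 2 = 7"
  "dmul 8 3 = 11"
  "dmul 8 4 = 9"
  "dmul 8 5 = 10"
  "dmul 8 6 = 2"
  "dmul 8 7 = 0"
  "dmul 8 8 = 1"
  "dmul 8 9 = 5"
  "dmul 8 10 = 3"
  "dmul 8 11 = 4"
  "dmul 9 0 = 9"
  "dmul 9 1 = 11"
  "dmul 9 2 = 10"
  "dmul 9 3 = 0"
  "dmul 9 4 = 2"
  "dmul 9 5 = 1"
  "dmul 9 6 = 3"
  "dmul 9 7 = 5"
  "dmul 9 8 = 4"
  "dmul 9 9 = 6"
  "dmul 9 10 = 8"
  "dmul 9 11 = 7"
  "dmul 10 0 = 10"
  "dmul 10 1 = 9"
  "dmul 10 2 = 11"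
  "dmul 10 3 = 1"
  "dmul 10 4 = 0"
  "dmul 10 5 = 2"
  "dmul 10 6 = 4"
  "dmul 10 7 = 3"
  "dmul 10 8 = 5"
  "dmul 10 9 = 7"
  "dmul 10 10 = 6"
  "dmul 10 11 = 8"
  "dmul 11 0 = 11"
  "dmul 11 1 = 10"
  "dmul 11 2 = 9"
  "dmul 11 3 = 2"
  "dmul 11 4 = 1"
  "dmul 11 5 = 0"
  "dmul 11 6 = 5"
  "dmul 11 7 = 4"
  "dmul 11 8 = 3"
  "dmul 11 9 = 8"
  "dmul 11 10 = 7"
  "dmul 11 11 = 6"
  by (simp_all add: dmul_def)

lemma assoc_all: "\<forall>x\<in>{0,1,2,3,4,5,6,7,8,9,10,11}. \<forall>y\<in>{0,1,2,3,4,5,6,7,8,9,10,11}. \<forall>z\<in>{0,1,2,3,4,5,6,7,8,9,10,11}. dmul (dmul x y) z = dmul x (dmul y z)"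
  by (simp only: ball_simps(5,7) tbl simp_thms)

lemma closed_all: "\<forall>x\<in>{0,1,2,3,4,5,6,7,8,9,10,11}. \<forall>y\<in>{0,1,2,3,4,5,6,7,8,9,10,11}. dmul x y \<in> {0,1,2,3,4,5,6,7,8,9,10,11}"
  by (simp only: ball_simps(5,7) tbl simp_thms insert_iff)

lemma one_all: "\<forall>x\<in>{0,1,2,3,4,5,6,7,8,9,10,11}. dmul 0 x = x"
  by (simp only: ball_simps(5,7) tbl simp_thms)

lemma inv_all: "\<forall>x\<in>{0,1,2,3,4,5,6,7,8,9,10,11}. \<exists>y\<in>{0,1,2,3,4,5,6,7,8,9,10,11}. dmul y x = 0"
  by (simp only: ball_simps(5,7) bex_simps(3,5) tbl simp_thms insert_iff)

lemma groupD: "group D"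
proof (rule groupI)
  show "x \<otimes>\<^bsub>D\<^esub> y \<in> carrier D" if "x \<in> carrier D" "y \<in> carrier D" for x y
    using closed_all[rule_format, OF that[unfolded D_simps(1)]] unfolding D_simps .
  show "\<one>\<^bsub>D\<^esub> \<in> carrier D" unfolding D_simps by simp
  show "x \<otimes>\<^bsub>D\<^esub> y \<otimes>\<^bsub>D\<^esub> z = x \<otimes>\<^bsub>D\<^esub> (y \<otimes>\<^bsub>D\<^esub> z)"
    if "x \<in> carrier D" "y \<in> carrier D" "z \<in> carrier D" for x y z
    using assoc_all[rule_format, OF that[unfolded D_simps(1)]] unfolding D_simps .
  show "\<one>\<^bsub>D\<^esub> \<otimes>\<^bsub>D\<^esub> x = x" if "x \<in> carrier D" for x
    using one_all[rule_format, OF that[unfolded D_simps(1)]] unfolding D_simps .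
  show "\<exists>y\<in>carrier D. y \<otimes>\<^bsub>D\<^esub> x = \<one>\<^bsub>D\<^esub>" if "x \<in> carrier D" for x
    using inv_all[rule_format, OF that[unfolded D_simps(1)]] unfolding D_simps .
qed

lemma invD0: "inv\<^bsub>D\<^esub> 0 = 0"
  by (rule group.inv_equality[OF groupD]) (simp_all add: D_simps tbl)
lemma invD1: "inv\<^bsub>D\<^esub> 1 = 2"
  by (rule group.inv_equality[OF groupD]) (simp_all add: D_simps dmul_def)
lemma invD2: "inv\<^bsub>D\<^esub> 2 = 1"
  by (rule group.inv_equality[OF groupD]) (simp_all add: D_simps dmul_def)
lemma invD3: "inv\<^bsub>D\<^esub> 3 = 9"
  by (rule group.inv_equality[OF groupD]) (simp_all add: D_simps tbl)
lemma invD4: "inv\<^bsub>D\<^esub> 4 = 10"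
  by (rule group.inv_equality[OF groupD]) (simp_all add: D_simps tbl)
lemma invD5: "inv\<^bsub>D\<^esub> 5 = 11"
  by (rule group.inv_equality[OF groupD]) (simp_all add: D_simps tbl)
lemma invD6: "inv\<^bsub>D\<^esub> 6 = 6"
  by (rule group.inv_equality[OF groupD]) (simp_all add: D_simps tbl)
lemma invD7: "inv\<^bsub>D\<^esub> 7 = 8"
  by (rule group.inv_equality[OF groupD]) (simp_all add: D_simps tbl)
lemma invD8: "inv\<^bsub>D\<^esub> 8 = 7"
  by (rule group.inv_equality[OF groupD]) (simp_all add: D_simps tbl)
lemma invD9: "inv\<^bsub>D\<^esub> 9 = 3"
  by (rule group.inv_equality[OF groupD]) (simp_all add: D_simps tbl)
lemma invD10: "inv\<^bsub>D\<^esub> 10 = 4"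
  by (rule group.inv_equality[OF groupD]) (simp_all add: D_simps tbl)
lemma invD11: "inv\<^bsub>D\<^esub> 11 = 5"
  by (rule group.inv_equality[OF groupD]) (simp_all add: D_simps tbl)
lemmas invD = invD0 invD1 invD2 invD3 invD4 invD5 invD6 invD7 invD8 invD9 invD10 invD11

lemma quot_set_UN: "quot_set G S = (\<Union>x\<in>S. \<Union>y\<in>S. {x \<otimes>\<^bsub>G\<^esub> inv\<^bsub>G\<^esub> y})"
  unfolding quot_set_def by blast

lemma D_realize: "realizes D 2 2 4"
proof -
  have "TPP D {0,3} {0,4} {0,5,6,11}"
    unfolding TPP_def quot_set_UN D_simps by (simp add: invD tbl)
  then show ?thesis unfolding realizes_def by fastforce
qed

lemma D_sub_key:
  assumes sg: "subgroup H D" and h: "h \<in> H" "h \<noteq> 0"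
  shows "6 \<in> H \<or> 1 \<in> H"
proof -
  have c: "h \<in> {0,1,2,3,4,5,6,7,8,9,10,11}" using subgroup.subset[OF sg] h D_simps(1) by blast
  have m: "dmul h h \<in> H" "dmul (dmul h h) h \<in> H"
    using subgroup.m_closed[OF sg] h(1) D_simps(2) by metis+
  show ?thesis using c m h by (auto simp: tbl)
qed

lemma D_nontriv:
  assumes "finite S" "card S \<ge> 2"
  shows "\<exists>h\<in>S. h \<noteq> (0::nat)"
proof (rule ccontr)
  assume "\<not> ?thesis"
  then have "S \<subseteq> {0}" by blast
  then have "card S \<le> 1" using card_mono[of "{0::nat}" S] by simp
  then show False using assms by simp
qed

lemma D_sub_bound:
  assumes "realizes_subgroups D n p m"
  shows "n * p * m \<le> 12"
proof -
  obtain S1 S2 S3 where T: "TPP D S1 S2 S3" and sg: "subgroup S1 D" "subgroup S2 D" "subgroup S3 D"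
    and c: "card S1 = n" "card S2 = p" "card S3 = m"
    using assms unfolding realizes_subgroups_def by blast
  have fin: "finite (carrier D)" and cc: "card (carrier D) = 12" by (simp_all add: D_simps)
  have sub: "S1 \<subseteq> carrier D" "S2 \<subseteq> carrier D" "S3 \<subseteq> carrier D" using T unfolding TPP_def by auto
  have fs: "finite S1" "finite S2" "finite S3" using sub fin finite_subset by blast+
  have b12: "n * p \<le> 12" using card_pair_bound[OF groupD fin sub(1,2) TPP_pairs(1)[OF groupD T]] c cc by simp
  have b13: "n * m \<le> 12" using card_pair_bound[OF groupD fin sub(1,3) TPP_pairs(2)[OF groupD T]] c cc by simp
  have b23: "p * m \<le> 12" using card_pair_bound[OF groupD fin sub(2,3) TPP_pairs(3)[OF groupD T]] c cc by simp
  show ?thesis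
  proof (cases "n \<le> 1 \<or> p \<le> 1 \<or> m \<le> 1")
    case True
    then show ?thesis
    proof (elim disjE)
      assume "n \<le> 1" then have "n * (p * m) \<le> 1 * (p * m)" by (rule mult_le_mono1)
      then show ?thesis using b23 by (metis mult.assoc mult_1 order.trans)
    next
      assume "p \<le> 1" then have "p * (n * m) \<le> 1 * (n * m)" by (rule mult_le_mono1)
      then show ?thesis using b13 by (metis mult.assoc mult.commute mult_1 order.trans)
    next
      assume "m \<le> 1" then have "m * (n * p) \<le> 1 * (n * p)" by (rule mult_le_mono1)
      then show ?thesis using b12 by (metis mult.assoc mult.commute mult_1 order.trans)
    qed
  next
    case False
    then have "card S1 \<ge> 2" "card S2 \<ge> 2" "card S3 \<ge> 2" using c by auto
    then obtain h1 h2 h3 where h: "h1 \<in> S1" "h1 \<noteq> 0" "h2 \<in> S2" "h2 \<noteq> 0" "h3 \<in> S3" "h3 \<noteq> 0"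
      using D_nontriv fs by metis
    have k: "6 \<in> S1 \<or> 1 \<in> S1" "6 \<in> S2 \<or> 1 \<in> S2" "6 \<in> S3 \<or> 1 \<in> S3"
      using D_sub_key sg h by blast+
    have x: "\<And>w. w \<in> S1 \<Longrightarrow> w \<in> S2 \<Longrightarrow> w = 0" "\<And>w. w \<in> S1 \<Longrightarrow> w \<in> S3 \<Longrightarrow> w = 0"
      "\<And>w. w \<in> S2 \<Longrightarrow> w \<in> S3 \<Longrightarrow> w = 0"
      using sub_conflict[OF groupD T sg] D_simps(3) by auto
    show ?thesis using k x by fastforce
  qed
qed

theorem mainTheorem6:
  shows "(\<forall>G :: ('a, 'b) monoid_scheme.
            group G \<and> finite (carrier G) \<and> carrier G \<noteq> {\<one>\<^bsub>G\<^esub>} \<longrightarrow>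
              TPP_subgroup_capacity G \<le> TPP_capacity G)
       \<and> (\<exists>G :: nat monoid. group G \<and> finite (carrier G) \<and> carrier G \<noteq> {\<one>\<^bsub>G\<^esub>} \<and>
              TPP_subgroup_capacity G < TPP_capacity G)"
proof
  show "\<forall>G :: ('a, 'b) monoid_scheme.
            group G \<and> finite (carrier G) \<and> carrier G \<noteq> {\<one>\<^bsub>G\<^esub>} \<longrightarrow>
              TPP_subgroup_capacity G \<le> TPP_capacity G"
  proof (intro allI impI)
    fix G :: "('a, 'b) monoid_scheme"
    assume h: "group G \<and> finite (carrier G) \<and> carrier G \<noteq> {\<one>\<^bsub>G\<^esub>}"
    show "TPP_subgroup_capacity G \<le> TPP_capacity G"
      by (rule part1) (use h in simp_all)
  qed
  have fin: "finite (carrier D)" by (simp add: D_simps)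
  have A: "TPP_subgroup_capacity D \<le> 12"
    unfolding TPP_subgroup_capacity_def
  proof (rule Max.boundedI)
    show "finite {n * p * m |n p m. realizes_subgroups D n p m}"
      by (rule finite_subset[OF sub_realizes(2)[OF groupD] realizes_finite[OF fin]])
    show "{n * p * m |n p m. realizes_subgroups D n p m} \<noteq> {}" by (rule sub_realizes(1)[OF groupD])
    fix a assume "a \<in> {n * p * m |n p m. realizes_subgroups D n p m}"
    then obtain n p m where "a = n * p * m" "realizes_subgroups D n p m" by blast
    then show "a \<le> 12" using D_sub_bound by simp
  qed
  have B: "16 \<le> TPP_capacity D"
  proof -
    have e: "(16::nat) = 2 * 2 * 4" by simp
    have "(16::nat) \<in> {n * p * m |n p m. realizes D n p m}"
      unfolding e using D_realize by blast
    then show ?thesis unfolding TPP_capacity_def by (rule Max_ge[OF realizes_finite[OF fin]])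
  qed
  have C: "carrier D \<noteq> {\<one>\<^bsub>D\<^esub>}" by (simp add: D_simps)
  have "TPP_subgroup_capacity D < TPP_capacity D" using A B by simp
  then show "\<exists>G :: nat monoid. group G \<and> finite (carrier G) \<and> carrier G \<noteq> {\<one>\<^bsub>G\<^esub>} \<and>
              TPP_subgroup_capacity G < TPP_capacity G"
    using groupD fin C by blast
qed

end
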